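(* Let $1\le m<n$ be integers and let $c_1,\dots,c_m$ be non-negative integers satisfying $c_1+2c_2+\cdots+mc_m\le n-m-1$. Let $\pi\in S_n$ be chosen uniformly at random, and let $c_i(\pi)$ denote the number of cycles of length $i$ in $\pi$. Then \[ \frac{1}{(2m+2)\prod_{i=1}^m c_i!\, i^{c_i}} \le \mathbb{P}\big(c_1(\pi)=c_1,\dots,c_m(\pi)=c_m\big) \le \frac{1}{(m+1)\prod_{i=1}^m c_i!\, i^{c_i}}. \]
   Context: $S_n$ is the symmetric group on $\{1,\dots,n\}$. *)

theory Defs
  imports "HOL-Combinatorics.Combinatorics" Complex_Main
begin

definition cyc_count :: "nat \<Rightarrow> (nat \<Rightarrow> nat) \<Rightarrow> nat \<Rightarrow> nat" where
  "cyc_count n p i = card {orbit p x | x. x \<in> {1..n} \<and> card (orbit p x) = i}"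

definition sym_prob :: "nat \<Rightarrow> ((nat \<Rightarrow> nat) \<Rightarrow> bool) \<Rightarrow> real" where
  "sym_prob n P = real (card {p. p permutes {1..n} \<and> P p}) / real (card {p. p permutes {1..n}})"

end

theory Submission
  imports Defs
begin

lemma perm_orbit_eq:
  assumes "permutation f" "x \<in> orbit f y"
  shows "orbit f x = orbit f y"
  using assms cyclic_on_orbit' orbit_cyclic_eq3 by metis

lemma perm_orbit_sym:
  assumes "permutation f" "x \<in> orbit f y"
  shows "y \<in> orbit f x"
  using perm_orbit_eq[OF assms] assms(1) permutation_self_in_orbit by metis

lemma insert_orbit_a:
  assumes p: "p permutes S" and fin: "finite S" and a: "a \<notin> S" and b: "b \<in> S"
  shows "orbit (transpose a b \<circ> p) a = insert a (orbit p b)"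
proof -
  let ?q = "transpose a b \<circ> p"
  have perm: "permutation p" using p fin permutation_permutes by blast
  have pa: "p a = a" using p a permutes_not_in by metis
  have bO: "b \<in> orbit p b" using perm permutation_self_in_orbit by metis
  have OS: "orbit p b \<subseteq> S" using permutes_orbit_subset[OF p b] .
  have qa: "?q a = b" using pa by simp
  have qperm: "?q permutes insert a S"
    using permutes_compose[OF permutes_subset[OF p subset_insertI] permutes_swap_id[OF insertI1 insertI2[OF b]]] .
  have qpermu: "permutation ?q" using qperm fin permutation_permutes by blast
  show ?thesis
  proof
    show "orbit ?q a \<subseteq> insert a (orbit p b)"
    proof
      fix y assume "y \<in> orbit ?q a"
      then show "y \<in> insert a (orbit p b)"
      proof induction
        case base then show ?case using qa bO by simp
      next
        case (step y)
        from step.IH show ?case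
        proof
          assume "y = a" then show ?thesis using qa bO by simp
        next
          assume yO: "y \<in> orbit p b"
          then have "p y \<in> orbit p b" by (rule orbit.step)
          moreover have "p y \<noteq> a" using \<open>p y \<in> orbit p b\<close> OS a by blast
          ultimately show ?thesis by (auto simp: transpose_def)
        qed
      qed
    qed
  next
    have "a \<in> orbit ?q a" using qpermu permutation_self_in_orbit by metis
    moreover have bq: "b \<in> orbit ?q a" using qa orbit.base by metis
    moreover have "y \<in> orbit ?q a" if "y \<in> orbit p b" for y
      using that
    proof induction
      case base
      show ?case
      proof (cases "p b = b")
        case True then show ?thesis using bq by metis
      next
        case False
        have "p b \<in> S" using p b by (simp add: permutes_in_image)
        then have "p b \<noteq> a" using a by blast
        then have "?q b = p b" using False by (auto simp: transpose_def)
        then show ?thesis using orbit.step[OF bq] by metis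
      qed
    next
      case (step y)
      show ?case
      proof (cases "p y = b")
        case True then show ?thesis using bq by metis
      next
        case False
        have "p y \<in> orbit p b" using step(1) by (rule orbit.step)
        then have "p y \<noteq> a" using OS a by blast
        then have "?q y = p y" using False by (auto simp: transpose_def)
        then show ?thesis using orbit.step[OF step(2)] by metis
      qed
    qed
    ultimately show "insert a (orbit p b) \<subseteq> orbit ?q a" by blast
  qed
qed

lemma insert_orbit_other:
  assumes p: "p permutes S" and fin: "finite S" and a: "a \<notin> S" and b: "b \<in> S"
    and x: "x \<in> S" "x \<notin> orbit p b"
  shows "orbit (transpose a b \<circ> p) x = orbit p x"
proof -
  have perm: "permutation p" using p fin permutation_permutes by blast
  have OS: "orbit p x \<subseteq> S" using permutes_orbit_subset[OF p x(1)] .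
  have bn: "b \<notin> orbit p x" using perm_orbit_sym[OF perm] x(2) by blast
  show ?thesis
  proof (rule orbit_cong)
    show "x \<in> orbit p x" using perm permutation_self_in_orbit by metis
    fix s assume "s \<in> orbit p x"
    then have "p s \<in> orbit p x" by (rule orbit.step)
    then have "p s \<noteq> a" "p s \<noteq> b" using OS a bn by auto
    then show "(transpose a b \<circ> p) s = p s" by (auto simp: transpose_def)
  qed
qed


lemma insert_orbit_all:
  assumes p: "p permutes S" and fin: "finite S" and a: "a \<notin> S" and b: "b \<in> insert a S"
    and x: "x \<in> insert a S"
  shows "orbit (transpose a b \<circ> p) x =
     (if x \<in> insert a (if b = a then {} else orbit p b) then insert a (if b = a then {} else orbit p b) else orbit p x)"
proof (cases "b = a")
  case True
  have pa: "p a = a" using p a permutes_not_in by metis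
  show ?thesis
  proof (cases "x = a")
    case True
    then show ?thesis using pa \<open>b = a\<close> orbit_eq_singleton_iff[of p a] by simp
  qed (use True in simp)
next
  case False
  then have bS: "b \<in> S" using b by simp
  have qperm: "transpose a b \<circ> p permutes insert a S"
    using permutes_compose[OF permutes_subset[OF p subset_insertI] permutes_swap_id[OF insertI1 insertI2[OF bS]]] .
  have qpermu: "permutation (transpose a b \<circ> p)" using qperm fin permutation_permutes by blast
  note A = insert_orbit_a[OF p fin a bS]
  show ?thesis
  proof (cases "x \<in> insert a (orbit p b)")
    case True
    then have "x \<in> orbit (transpose a b \<circ> p) a" using A by simp
    then have "orbit (transpose a b \<circ> p) x = orbit (transpose a b \<circ> p) a"
      by (rule perm_orbit_eq[OF qpermu])
    then show ?thesis using A True False by simp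
  next
    case xn: False
    then have "x \<in> S" using x by simp
    then show ?thesis using insert_orbit_other[OF p fin a bS] xn False by simp
  qed
qed

definition Eo :: "nat set \<Rightarrow> (nat \<Rightarrow> nat) \<Rightarrow> nat \<Rightarrow> nat" where
  "Eo T f i = card {x\<in>T. card (orbit f x) = i}"

lemma Eo_step:
  assumes p: "p permutes S" and fin: "finite S" and a: "a \<notin> S" and b: "b \<in> insert a S"
  defines "Ob \<equiv> (if b = a then {} else orbit p b)"
  shows "Eo (insert a S) (transpose a b \<circ> p) i + (if i = card Ob then card Ob else 0)
       = Eo S p i + (if i = Suc (card Ob) then Suc (card Ob) else 0)"
proof -
  have perm: "permutation p" using p fin permutation_permutes by blast
  have OS: "Ob \<subseteq> S" unfolding Ob_def using permutes_orbit_subset[OF p] b by auto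
  have finO: "finite Ob" using OS fin finite_subset by blast
  have aO: "a \<notin> Ob" using OS a by blast
  have cardO: "card (insert a Ob) = Suc (card Ob)" using finO aO by simp
  define R where "R = {x\<in>S - Ob. card (orbit p x) = i}"
  have orb: "\<And>x. x \<in> insert a S \<Longrightarrow> orbit (transpose a b \<circ> p) x = (if x \<in> insert a Ob then insert a Ob else orbit p x)"
    using insert_orbit_all[OF p fin a b] unfolding Ob_def by blast
  have s1: "{x\<in>insert a S. card (orbit (transpose a b \<circ> p) x) = i} = {x\<in>insert a Ob. Suc (card Ob) = i} \<union> R"
  proof -
    have "(x \<in> insert a S \<and> card (orbit (transpose a b \<circ> p) x) = i) \<longleftrightarrow> ((x \<in> insert a Ob \<and> Suc (card Ob) = i) \<or> x \<in> R)" for x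
    proof (cases "x \<in> insert a Ob")
      case True
      then have xa: "x \<in> insert a S" using OS by blast
      have "orbit (transpose a b \<circ> p) x = insert a Ob" using orb[OF xa] True by simp
      moreover have "x \<notin> R" using True a OS unfolding R_def by blast
      ultimately show ?thesis using xa True cardO by simp
    next
      case False
      have "x \<in> insert a S \<longleftrightarrow> x \<in> S - Ob" using False by blast
      moreover have "x \<in> insert a S \<Longrightarrow> orbit (transpose a b \<circ> p) x = orbit p x" using orb False by simp
      ultimately show ?thesis using False unfolding R_def by auto
    qed
    then show ?thesis by blast
  qed
  have oO: "\<And>x. x \<in> Ob \<Longrightarrow> card (orbit p x) = card Ob"
  proof -
    fix x assume "x \<in> Ob"
    then have "b \<noteq> a" "x \<in> orbit p b" unfolding Ob_def by (auto split: if_splits)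
    then show "card (orbit p x) = card Ob" using perm_orbit_eq[OF perm] unfolding Ob_def by simp
  qed
  have s2: "{x\<in>S. card (orbit p x) = i} = {x\<in>Ob. card Ob = i} \<union> R"
    using oO OS unfolding R_def by auto
  have finR: "finite R" unfolding R_def using fin by simp
  have c1: "card ({x\<in>insert a Ob. Suc (card Ob) = i} \<union> R) = (if i = Suc (card Ob) then Suc (card Ob) else 0) + card R"
  proof (cases "i = Suc (card Ob)")
    case True
    have "{x\<in>insert a Ob. Suc (card Ob) = i} = insert a Ob" using True by auto
    moreover have "insert a Ob \<inter> R = {}" unfolding R_def using a by auto
    ultimately show ?thesis using card_Un_disjoint[OF _ finR, of "insert a Ob"] finO cardO True by simp
  qed simp
  have c2: "card ({x\<in>Ob. card Ob = i} \<union> R) = (if i = card Ob then card Ob else 0) + card R"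
  proof (cases "i = card Ob")
    case True
    have "{x\<in>Ob. card Ob = i} = Ob" using True by auto
    moreover have "Ob \<inter> R = {}" unfolding R_def by auto
    ultimately show ?thesis using card_Un_disjoint[OF finO finR] True by simp
  qed simp
  show ?thesis unfolding Eo_def s1 s2 c1 c2 by simp
qed

lemma cyc_count_Eo:
  assumes p: "p permutes {1..n}"
  shows "cyc_count n p i * i = Eo {1..n} p i"
proof -
  let ?S = "{1..n::nat}"
  let ?C = "{orbit p x | x. x \<in> ?S \<and> card (orbit p x) = i}"
  have perm: "permutation p" using p permutation_permutes by blast
  have sub: "?C \<subseteq> Pow ?S" using permutes_orbit_subset[OF p] by blast
  have finC: "finite ?C" by (rule finite_subset[OF sub]) simp
  have U: "\<Union>?C = {x\<in>?S. card (orbit p x) = i}"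
  proof
    show "\<Union>?C \<subseteq> {x\<in>?S. card (orbit p x) = i}"
    proof
      fix y assume "y \<in> \<Union>?C"
      then obtain x where x: "x \<in> ?S" "card (orbit p x) = i" "y \<in> orbit p x" by blast
      then show "y \<in> {x\<in>?S. card (orbit p x) = i}"
        using perm_orbit_eq[OF perm x(3)] permutes_orbit_subset[OF p x(1)] by auto
    qed
  next
    show "{x\<in>?S. card (orbit p x) = i} \<subseteq> \<Union>?C"
    proof
      fix x assume x: "x \<in> {x\<in>?S. card (orbit p x) = i}"
      have "x \<in> orbit p x" using perm permutation_self_in_orbit by metis
      moreover have "orbit p x \<in> ?C" using x by blast
      ultimately show "x \<in> \<Union>?C" by blast
    qed
  qed
  have "i * card ?C = card (\<Union>?C)"
  proof (rule card_partition)
    show "finite (\<Union> ?C)" using U by simp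
    show "\<And>c. c \<in> ?C \<Longrightarrow> card c = i" by auto
    show "\<And>c1 c2. c1 \<in> ?C \<Longrightarrow> c2 \<in> ?C \<Longrightarrow> c1 \<noteq> c2 \<Longrightarrow> c1 \<inter> c2 = {}"
    proof -
      fix c1 c2 assume "c1 \<in> ?C" "c2 \<in> ?C" "c1 \<noteq> c2"
      then obtain x1 x2 where c: "c1 = orbit p x1" "c2 = orbit p x2" by blast
      show "c1 \<inter> c2 = {}"
      proof (rule ccontr)
        assume "c1 \<inter> c2 \<noteq> {}"
        then obtain y where "y \<in> orbit p x1" "y \<in> orbit p x2" using c by blast
        then have "orbit p x1 = orbit p x2" using perm_orbit_eq[OF perm] by metis
        then show False using c \<open>c1 \<noteq> c2\<close> by simp
      qed
    qed
  qed (rule finC)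
  then show ?thesis unfolding cyc_count_def Eo_def U by (simp add: mult.commute)
qed


definition Ev :: "nat \<Rightarrow> nat \<Rightarrow> (nat \<Rightarrow> nat) \<Rightarrow> (nat \<Rightarrow> nat) \<Rightarrow> bool" where
  "Ev m n p c \<longleftrightarrow> (\<forall>i\<in>{1..m}. Eo {1..n} p i = i * c i)"

definition phi :: "(nat \<Rightarrow> nat) \<Rightarrow> nat \<Rightarrow> nat \<Rightarrow> nat" where
  "phi c l = (\<lambda>i. if i = l then c i + 1 else if i = Suc l then c i - 1 else c i)"

definition valid :: "nat \<Rightarrow> (nat \<Rightarrow> nat) \<Rightarrow> nat \<Rightarrow> bool" where
  "valid m c l \<longleftrightarrow> (Suc l \<le> m \<longrightarrow> 1 \<le> c (Suc l))"

definition lenb :: "nat \<Rightarrow> (nat \<Rightarrow> nat) \<Rightarrow> nat \<Rightarrow> nat" where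
  "lenb n p b = (if b = Suc n then 0 else card (orbit p b))"

lemma Ev_step_i:
  fixes E E' :: "nat \<Rightarrow> nat"
  assumes key: "E' i + (if i = l then l else 0) = E i + (if i = Suc l then Suc l else 0)"
    and i: "1 \<le> i"
  shows "(E' i = i * c i) \<longleftrightarrow> ((i = Suc l \<longrightarrow> 1 \<le> c i) \<and> E i = i * phi c l i)"
proof (cases "i = l")
  case True
  then show ?thesis using key by (auto simp: phi_def)
next
  case F1: False
  show ?thesis
  proof (cases "i = Suc l")
    case True
    then have e: "E' i = E i + i" using key F1 by simp
    show ?thesis
    proof (cases "c i")
      case 0 then show ?thesis using e i True by (simp add: phi_def)
    next
      case (Suc k) then show ?thesis using e i True F1 by (simp add: phi_def)
    qed
  next
    case False
    then show ?thesis using key F1 by (simp add: phi_def)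
  qed
qed

lemma Ev_step:
  assumes p: "p permutes {1..n}" and b: "b \<in> {1..Suc n}"
  shows "Ev m (Suc n) (transpose (Suc n) b \<circ> p) c \<longleftrightarrow>
         valid m c (lenb n p b) \<and> Ev m n p (phi c (lenb n p b))"
proof -
  let ?l = "lenb n p b"
  have ins: "{1..Suc n} = insert (Suc n) {1..n}" by (simp add: atLeastAtMostSuc_conv)
  have b': "b \<in> insert (Suc n) {1..n}" using b by auto
  have cardO: "card (if b = Suc n then {} else orbit p b) = ?l" unfolding lenb_def by simp
  have key: "Eo {1..Suc n} (transpose (Suc n) b \<circ> p) i + (if i = ?l then ?l else 0)
       = Eo {1..n} p i + (if i = Suc ?l then Suc ?l else 0)" for i
    using Eo_step[OF p finite_atLeastAtMost _ b', of i] unfolding cardO ins by simp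
  have "(\<forall>i\<in>{1..m}. Eo {1..Suc n} (transpose (Suc n) b \<circ> p) i = i * c i) \<longleftrightarrow>
        (\<forall>i\<in>{1..m}. (i = Suc ?l \<longrightarrow> 1 \<le> c i) \<and> Eo {1..n} p i = i * phi c ?l i)"
    using Ev_step_i[where E'="Eo {1..Suc n} (transpose (Suc n) b \<circ> p)" and E="Eo {1..n} p", OF key] by auto
  also have "\<dots> \<longleftrightarrow> valid m c ?l \<and> Ev m n p (phi c ?l)"
    unfolding valid_def Ev_def by auto
  finally show ?thesis unfolding Ev_def by simp
qed

lemma card_group:
  assumes "finite A" "finite T"
  shows "(\<Sum>i\<in>T. card {x\<in>A. f x = i}) = card {x\<in>A. f x \<in> T}"
proof -
  have "card {x\<in>A. f x \<in> T} = (\<Sum>x\<in>{x\<in>A. f x \<in> T}. 1)" by simp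
  also have "\<dots> = (\<Sum>i\<in>T. \<Sum>x\<in>{x. x \<in> {x\<in>A. f x \<in> T} \<and> f x = i}. 1)"
    by (rule sum.group[symmetric]) (use assms in auto)
  also have "\<dots> = (\<Sum>i\<in>T. card {x\<in>A. f x = i})"
  proof (rule sum.cong)
    fix i assume "i \<in> T"
    then have "{x. x \<in> {x\<in>A. f x \<in> T} \<and> f x = i} = {x\<in>A. f x = i}" by auto
    then show "(\<Sum>x\<in>{x. x \<in> {x\<in>A. f x \<in> T} \<and> f x = i}. 1) = card {x\<in>A. f x = i}" by simp
  qed simp
  finally show ?thesis by simp
qed

lemma orbit_card_pos:
  assumes p: "p permutes S" "finite S" "x \<in> S"
  shows "1 \<le> card (orbit p x)"
proof -
  have perm: "permutation p" using p permutation_permutes by blast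
  have "x \<in> orbit p x" using perm permutation_self_in_orbit by metis
  moreover have "finite (orbit p x)" using finite_subset[OF permutes_orbit_subset[OF p(1,3)] p(2)] .
  ultimately show ?thesis by (metis One_nat_def Suc_leI card_gt_0_iff empty_iff)
qed

lemma Eo_total:
  assumes p: "p permutes {1..n}"
  shows "(\<Sum>i\<in>{1..m}. Eo {1..n} p i) + card {b\<in>{1..n}. m < card (orbit p b)} = n"
proof -
  have "(\<Sum>i\<in>{1..m}. Eo {1..n} p i) = card {b\<in>{1..n}. card (orbit p b) \<in> {1..m}}"
    unfolding Eo_def by (rule card_group) auto
  moreover have "{b\<in>{1..n}. card (orbit p b) \<in> {1..m}} \<union> {b\<in>{1..n}. m < card (orbit p b)} = {1..n}"
    using orbit_card_pos[OF p] by force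
  moreover have "card ({b\<in>{1..n}. card (orbit p b) \<in> {1..m}} \<union> {b\<in>{1..n}. m < card (orbit p b)})
     = card {b\<in>{1..n}. card (orbit p b) \<in> {1..m}} + card {b\<in>{1..n}. m < card (orbit p b)}"
    by (rule card_Un_disjoint) auto
  ultimately show ?thesis by simp
qed


definition coef :: "(nat \<Rightarrow> nat) \<Rightarrow> nat \<Rightarrow> nat" where
  "coef c l = (if l = 0 then 1 else l * (c l + 1))"

definition ss :: "nat \<Rightarrow> (nat \<Rightarrow> nat) \<Rightarrow> nat" where
  "ss m c = (\<Sum>i=1..m. i * c i)"

lemma cnt_l:
  assumes p: "p permutes {1..n}"
  shows "card {b\<in>{1..Suc n}. lenb n p b = l} = (if l = 0 then 1 else Eo {1..n} p l)"
proof -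
  have pos: "\<And>b. b \<in> {1..n} \<Longrightarrow> 1 \<le> card (orbit p b)" using orbit_card_pos[OF p finite_atLeastAtMost] .
  have bS: "b \<in> {1..Suc n} \<longleftrightarrow> b = Suc n \<or> b \<in> {1..n}" for b by auto
  show ?thesis
  proof (cases "l = 0")
    case True
    have "{b\<in>{1..Suc n}. lenb n p b = l} = {Suc n}"
    proof (rule set_eqI)
      fix b
      show "b \<in> {b\<in>{1..Suc n}. lenb n p b = l} \<longleftrightarrow> b \<in> {Suc n}"
      proof (cases "b = Suc n")
        case True then show ?thesis using \<open>l = 0\<close> by (simp add: lenb_def)
      next
        case False
        have "b \<notin> {1..n} \<or> 1 \<le> card (orbit p b)" using pos by blast
        then show ?thesis using False \<open>l = 0\<close> bS[of b] unfolding lenb_def by auto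
      qed
    qed
    then show ?thesis using True by simp
  next
    case False
    have "{b\<in>{1..Suc n}. lenb n p b = l} = {b\<in>{1..n}. card (orbit p b) = l}"
    proof (rule set_eqI)
      fix b
      show "b \<in> {b\<in>{1..Suc n}. lenb n p b = l} \<longleftrightarrow> b \<in> {b\<in>{1..n}. card (orbit p b) = l}"
      proof (cases "b = Suc n")
        case True then show ?thesis using False by (simp add: lenb_def)
      next
        case F2: False
        then have "b \<in> {1..Suc n} \<longleftrightarrow> b \<in> {1..n}" using bS by blast
        moreover have "lenb n p b = card (orbit p b)" using F2 by (simp add: lenb_def)
        ultimately show ?thesis by (simp only: mem_Collect_eq)
      qed
    qed
    then show ?thesis using False unfolding Eo_def by simp
  qed
qed

lemma count_b:
  assumes p: "p permutes {1..n}"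
  shows "card {b\<in>{1..Suc n}. Ev m (Suc n) (transpose (Suc n) b \<circ> p) c}
    = (\<Sum>l\<le>m. coef c l * of_bool (valid m c l \<and> Ev m n p (phi c l))) + (n - ss m c) * of_bool (Ev m n p c)"
proof -
  define g where "g = lenb n p"
  define P where "P l \<longleftrightarrow> valid m c l \<and> Ev m n p (phi c l)" for l
  let ?S = "{1..Suc n}"
  have e1: "{b\<in>?S. Ev m (Suc n) (transpose (Suc n) b \<circ> p) c} = {b\<in>?S. P (g b)}"
    using Ev_step[OF p] unfolding P_def g_def by blast
  have e2: "{b\<in>?S. P (g b)} = {b\<in>{b\<in>?S. P (g b)}. g b \<in> {..m}} \<union> {b\<in>?S. P (g b) \<and> m < g b}"
    by auto
  have c2: "card {b\<in>?S. P (g b)} = card {b\<in>{b\<in>?S. P (g b)}. g b \<in> {..m}} + card {b\<in>?S. P (g b) \<and> m < g b}"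
    by (subst e2, rule card_Un_disjoint) auto
  have part1: "card {b\<in>{b\<in>?S. P (g b)}. g b \<in> {..m}} = (\<Sum>l\<le>m. coef c l * of_bool (P l))"
  proof -
    have "card {b\<in>{b\<in>?S. P (g b)}. g b \<in> {..m}} = (\<Sum>l\<le>m. card {x\<in>{b\<in>?S. P (g b)}. g x = l})"
      by (rule card_group[symmetric]) auto
    also have "\<dots> = (\<Sum>l\<le>m. coef c l * of_bool (P l))"
    proof (rule sum.cong)
      fix l assume l: "l \<in> {..m}"
      show "card {x\<in>{b\<in>?S. P (g b)}. g x = l} = coef c l * of_bool (P l)"
      proof (cases "P l")
        case False
        then have "{x\<in>{b\<in>?S. P (g b)}. g x = l} = {}" by auto
        then show ?thesis using False by simp
      next
        case True
        then have "{x\<in>{b\<in>?S. P (g b)}. g x = l} = {b\<in>?S. g b = l}" by auto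
        then have cc: "card {x\<in>{b\<in>?S. P (g b)}. g x = l} = (if l = 0 then 1 else Eo {1..n} p l)"
          using cnt_l[OF p] unfolding g_def by simp
        show ?thesis
        proof (cases "l = 0")
          case True then show ?thesis using cc \<open>P l\<close> by (simp add: coef_def)
        next
          case False
          then have "l \<in> {1..m}" using l by auto
          then have "Eo {1..n} p l = l * phi c l l" using \<open>P l\<close> unfolding P_def Ev_def by blast
          then show ?thesis using cc False \<open>P l\<close> by (simp add: coef_def phi_def)
        qed
      qed
    qed simp
    finally show ?thesis .
  qed
  have part2: "card {b\<in>?S. P (g b) \<and> m < g b} = (n - ss m c) * of_bool (Ev m n p c)"
  proof -
    have Pc: "P l \<longleftrightarrow> Ev m n p c" if "m < l" for l
    proof -
      have "valid m c l" using that unfolding valid_def by simp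
      moreover have "\<And>i. i \<in> {1..m} \<Longrightarrow> phi c l i = c i" using that unfolding phi_def by auto
      ultimately show ?thesis unfolding P_def Ev_def by auto
    qed
    have st: "{b\<in>?S. P (g b) \<and> m < g b} = (if Ev m n p c then {b\<in>{1..n}. m < card (orbit p b)} else {})"
    proof (rule set_eqI)
      fix b
      show "b \<in> {b\<in>?S. P (g b) \<and> m < g b} \<longleftrightarrow> b \<in> (if Ev m n p c then {b\<in>{1..n}. m < card (orbit p b)} else {})"
      proof (cases "b = Suc n")
        case True then show ?thesis by (simp add: g_def lenb_def)
      next
        case F2: False
        then have "b \<in> {1..Suc n} \<longleftrightarrow> b \<in> {1..n}" by auto
        moreover have "g b = card (orbit p b)" using F2 by (simp add: g_def lenb_def)
        ultimately show ?thesis using Pc[of "card (orbit p b)"] by auto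
      qed
    qed
    show ?thesis
    proof (cases "Ev m n p c")
      case True
      have "(\<Sum>i\<in>{1..m}. Eo {1..n} p i) = ss m c"
        unfolding ss_def by (rule sum.cong) (use True in \<open>auto simp: Ev_def\<close>)
      then have "card {b\<in>{1..n}. m < card (orbit p b)} = n - ss m c"
        using Eo_total[OF p, of m] by simp
      then show ?thesis using st True by simp
    qed (use st in simp)
  qed
  show ?thesis using e1 c2 part1 part2 unfolding P_def by simp
qed


definition NN :: "nat \<Rightarrow> nat \<Rightarrow> (nat \<Rightarrow> nat) \<Rightarrow> nat" where
  "NN m n c = card {p. p permutes {1..n} \<and> Ev m n p c}"

lemma NN_sum: "(\<Sum>p\<in>{p. p permutes {1..n}}. of_bool (Q \<and> Ev m n p c)) = (if Q then NN m n c else 0)"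
proof -
  have fin: "finite {p. p permutes {1..n::nat}}" by (rule finite_permutations) simp
  have "(\<Sum>p\<in>{p. p permutes {1..n}}. of_bool (Q \<and> Ev m n p c)) = (of_nat (card ({p. p permutes {1..n}} \<inter> {p. Q \<and> Ev m n p c})) :: nat)"
    using fin by simp
  moreover have "{p. p permutes {1..n}} \<inter> {p. Q \<and> Ev m n p c} = (if Q then {p. p permutes {1..n} \<and> Ev m n p c} else {})"
    by auto
  ultimately show ?thesis unfolding NN_def by simp
qed

lemma NN_rec:
  "NN m (Suc n) c = (\<Sum>l\<le>m. coef c l * (if valid m c l then NN m n (phi c l) else 0)) + (n - ss m c) * NN m n c"
proof -
  let ?P = "{p. p permutes {1..n}}"
  let ?S = "{1..Suc n}"
  let ?G = "\<lambda>(p, b). transpose (Suc n) b \<circ> p"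
  let ?B = "\<lambda>p. {b\<in>?S. Ev m (Suc n) (transpose (Suc n) b \<circ> p) c}"
  have ins: "?S = insert (Suc n) {1..n}" by (simp add: atLeastAtMostSuc_conv)
  have fin: "finite ?P" by (rule finite_permutations) simp
  have PI: "{q. q permutes ?S} = (\<lambda>(b, p). transpose (Suc n) b \<circ> p) ` {(b, p). b \<in> ?S \<and> p \<in> ?P}"
    unfolding ins by (rule permutes_insert)
  have seteq: "{q. q permutes ?S \<and> Ev m (Suc n) q c} = ?G ` (SIGMA p:?P. ?B p)"
  proof
    show "{q. q permutes ?S \<and> Ev m (Suc n) q c} \<subseteq> ?G ` (SIGMA p:?P. ?B p)"
    proof
      fix q assume q: "q \<in> {q. q permutes ?S \<and> Ev m (Suc n) q c}"
      then have "q \<in> {q. q permutes ?S}" by simp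
      then obtain b p where bp: "q = transpose (Suc n) b \<circ> p" "b \<in> ?S" "p \<in> ?P"
        unfolding PI by fastforce
      then have "(p, b) \<in> (SIGMA p:?P. ?B p)" using q by simp
      then show "q \<in> ?G ` (SIGMA p:?P. ?B p)" using bp(1) by force
    qed
  next
    show "?G ` (SIGMA p:?P. ?B p) \<subseteq> {q. q permutes ?S \<and> Ev m (Suc n) q c}"
    proof
      fix q assume "q \<in> ?G ` (SIGMA p:?P. ?B p)"
      then obtain x where x: "x \<in> (SIGMA p:?P. ?B p)" "q = ?G x" by blast
      obtain p b where pb: "x = (p, b)" by force
      have bp: "q = transpose (Suc n) b \<circ> p" "b \<in> ?B p" "p \<in> ?P" using x pb by auto
      then have "q \<in> {q. q permutes ?S}" unfolding PI by force
      then show "q \<in> {q. q permutes ?S \<and> Ev m (Suc n) q c}" using bp by simp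
    qed
  qed
  have inj: "inj_on ?G (SIGMA p:?P. ?B p)"
  proof (rule inj_onI)
    fix x y assume x: "x \<in> (SIGMA p:?P. ?B p)" and y: "y \<in> (SIGMA p:?P. ?B p)" and eq: "?G x = ?G y"
    obtain p b where pb: "x = (p, b)" by force
    obtain p' b' where pb': "y = (p', b')" by force
    have pP: "p permutes {1..n}" and pP': "p' permutes {1..n}" using x y pb pb' by auto
    have pa: "p (Suc n) = Suc n" using permutes_not_in[OF pP] by simp
    have pa': "p' (Suc n) = Suc n" using permutes_not_in[OF pP'] by simp
    have e: "transpose (Suc n) b \<circ> p = transpose (Suc n) b' \<circ> p'" using eq pb pb' by simp
    have "b = (transpose (Suc n) b \<circ> p) (Suc n)" using pa by simp
    also have "\<dots> = (transpose (Suc n) b' \<circ> p') (Suc n)" using e by simp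
    also have "\<dots> = b'" using pa' by simp
    finally have bb: "b = b'" .
    have "transpose (Suc n) b \<circ> (transpose (Suc n) b \<circ> p) = transpose (Suc n) b \<circ> (transpose (Suc n) b \<circ> p')"
      using e bb by simp
    then have "p = p'" by (simp add: o_assoc)
    then show "x = y" using pb pb' bb by simp
  qed
  have "NN m (Suc n) c = card (SIGMA p:?P. ?B p)"
    unfolding NN_def seteq card_image[OF inj] ..
  also have "\<dots> = (\<Sum>p\<in>?P. card (?B p))"
    by (rule card_SigmaI) (use fin in auto)
  also have "\<dots> = (\<Sum>p\<in>?P. (\<Sum>l\<le>m. coef c l * of_bool (valid m c l \<and> Ev m n p (phi c l))) + (n - ss m c) * of_bool (Ev m n p c))"
    by (rule sum.cong[OF refl]) (rule count_b, simp)
  also have "\<dots> = (\<Sum>l\<le>m. coef c l * (\<Sum>p\<in>?P. of_bool (valid m c l \<and> Ev m n p (phi c l)))) + (n - ss m c) * (\<Sum>p\<in>?P. of_bool (True \<and> Ev m n p c))"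
  proof -
    have s2: "(\<Sum>p\<in>?P. \<Sum>l\<le>m. coef c l * of_bool (valid m c l \<and> Ev m n p (phi c l)))
       = (\<Sum>l\<le>m. coef c l * (\<Sum>p\<in>?P. of_bool (valid m c l \<and> Ev m n p (phi c l))))"
      by (subst sum.swap) (simp only: sum_distrib_left)
    show ?thesis unfolding sum.distrib s2 by (simp only: sum_distrib_left simp_thms)
  qed
  also have "\<dots> = (\<Sum>l\<le>m. coef c l * (if valid m c l then NN m n (phi c l) else 0)) + (n - ss m c) * NN m n c"
    unfolding NN_sum by simp
  finally show ?thesis .
qed


definition WW :: "nat \<Rightarrow> (nat \<Rightarrow> nat) \<Rightarrow> real" where
  "WW m c = (\<Prod>i=1..m. fact (c i) * real i ^ c i)"

lemma change_prod:
  fixes f g :: "nat \<Rightarrow> real"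
  assumes "finite A" "B \<subseteq> A" "\<And>i. i \<in> A - B \<Longrightarrow> g i = f i"
  shows "prod g A * prod f B = prod f A * prod g B"
proof -
  have "prod g A = prod g B * prod g (A - B)" using prod.subset_diff[OF assms(2,1)] by (simp add: mult.commute)
  moreover have "prod f A = prod f B * prod f (A - B)" using prod.subset_diff[OF assms(2,1)] by (simp add: mult.commute)
  moreover have "prod g (A - B) = prod f (A - B)" using assms(3) by (rule prod.cong[OF refl])
  ultimately show ?thesis by simp
qed

lemma change_sum:
  fixes f g :: "nat \<Rightarrow> nat"
  assumes "finite A" "B \<subseteq> A" "\<And>i. i \<in> A - B \<Longrightarrow> g i = f i"
  shows "sum g A + sum f B = sum f A + sum g B"
proof -
  have "sum g A = sum g B + sum g (A - B)" using sum.subset_diff[OF assms(2,1)] by (simp add: add.commute)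
  moreover have "sum f A = sum f B + sum f (A - B)" using sum.subset_diff[OF assms(2,1)] by (simp add: add.commute)
  moreover have "sum g (A - B) = sum f (A - B)" using assms(3) by (rule sum.cong[OF refl])
  ultimately show ?thesis by simp
qed

lemma W_phi_lt:
  assumes l: "l < m" and t: "c (Suc l) = Suc t"
  shows "real (coef c l) * WW m c = real (Suc l) * real (c (Suc l)) * WW m (phi c l)"
    and "ss m (phi c l) + 1 = ss m c"
proof -
  let ?h = "\<lambda>i v. fact v * real i ^ v :: real"
  define B where "B = (if l = 0 then {Suc l} else {l, Suc l})"
  have B: "B \<subseteq> {1..m}" using l unfolding B_def by auto
  have off: "\<And>i. i \<in> {1..m} - B \<Longrightarrow> phi c l i = c i" unfolding B_def phi_def by (auto split: if_splits)
  have P: "(\<Prod>i=1..m. ?h i (phi c l i)) * (\<Prod>i\<in>B. ?h i (c i)) = (\<Prod>i=1..m. ?h i (c i)) * (\<Prod>i\<in>B. ?h i (phi c l i))"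
    by (rule change_prod) (use B off in auto)
  have S: "(\<Sum>i=1..m. i * phi c l i) + (\<Sum>i\<in>B. i * c i) = (\<Sum>i=1..m. i * c i) + (\<Sum>i\<in>B. i * phi c l i)"
    by (rule change_sum) (use B off in auto)
  show "real (coef c l) * WW m c = real (Suc l) * real (c (Suc l)) * WW m (phi c l)"
  proof (cases "l = 0")
    case True
    have "(\<Prod>i\<in>B. ?h i (c i)) = real (Suc t) * fact t" "(\<Prod>i\<in>B. ?h i (phi c l i)) = fact t"
      using True t unfolding B_def phi_def by simp_all
    then have "WW m (phi c l) * (real (Suc t) * fact t) = WW m c * fact t"
      using P unfolding WW_def by simp
    then have "WW m (phi c l) * real (Suc t) = WW m c" by simp
    then show ?thesis using True t by (simp add: coef_def mult.commute)
  next
    case False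
    define X where "X = fact (c l) * real l ^ c l * fact t * real (Suc l) ^ t"
    have Xp: "X \<noteq> 0" using False unfolding X_def by simp
    have "(\<Prod>i\<in>B. ?h i (c i)) = real (Suc t) * real (Suc l) * X"
      using False t unfolding B_def X_def by (simp add: algebra_simps)
    moreover have "(\<Prod>i\<in>B. ?h i (phi c l i)) = real (c l + 1) * real l * X"
      using False t unfolding B_def X_def phi_def by (simp add: algebra_simps)
    ultimately have "(WW m (phi c l) * (real (Suc t) * real (Suc l))) * X = (WW m c * (real (c l + 1) * real l)) * X"
      using P unfolding WW_def by (simp add: algebra_simps)
    then have "WW m (phi c l) * (real (Suc t) * real (Suc l)) = WW m c * (real (c l + 1) * real l)"
      using Xp by simp
    then show ?thesis using False t by (simp add: coef_def algebra_simps)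
  qed
  show "ss m (phi c l) + 1 = ss m c"
  proof (cases "l = 0")
    case True
    then show ?thesis using S t unfolding ss_def B_def phi_def by simp
  next
    case False
    then show ?thesis using S t unfolding ss_def B_def phi_def by simp
  qed
qed

lemma W_phi_m:
  assumes m: "1 \<le> m"
  shows "real (coef c m) * WW m c = WW m (phi c m)"
    and "ss m (phi c m) = ss m c + m"
proof -
  let ?h = "\<lambda>i v. fact v * real i ^ v :: real"
  have B: "{m} \<subseteq> {1..m}" using m by auto
  have off: "\<And>i. i \<in> {1..m} - {m} \<Longrightarrow> phi c m i = c i" unfolding phi_def by auto
  have P: "(\<Prod>i=1..m. ?h i (phi c m i)) * (\<Prod>i\<in>{m}. ?h i (c i)) = (\<Prod>i=1..m. ?h i (c i)) * (\<Prod>i\<in>{m}. ?h i (phi c m i))"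
    by (rule change_prod) (use B off in auto)
  have S: "(\<Sum>i=1..m. i * phi c m i) + (\<Sum>i\<in>{m}. i * c i) = (\<Sum>i=1..m. i * c i) + (\<Sum>i\<in>{m}. i * phi c m i)"
    by (rule change_sum) (use B off in auto)
  define X where "X = fact (c m) * real m ^ c m"
  have Xp: "X \<noteq> 0" unfolding X_def using m by simp
  have "WW m (phi c m) * X = WW m c * (real (c m + 1) * real m * X)"
    using P unfolding WW_def X_def phi_def by (simp add: algebra_simps)
  then have "WW m (phi c m) = WW m c * (real (c m + 1) * real m)" using Xp
    by (metis (no_types, lifting) mult.assoc mult.commute mult_cancel_right)
  then show "real (coef c m) * WW m c = WW m (phi c m)" using m by (simp add: coef_def algebra_simps)
  show "ss m (phi c m) = ss m c + m" using S unfolding ss_def phi_def by (simp add: algebra_simps)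
qed


fun dd :: "nat \<Rightarrow> nat \<Rightarrow> real" where
  "dd m 0 = 1"
| "dd m (Suc k) = (real k * dd m k + (if m \<le> k then dd m (k - m) else 0)) / real (Suc k)"

lemma sum_shift1: "(\<Sum>l<m. f (Suc l)) = (\<Sum>i=1..m. f i :: nat)"
proof (induction m)
  case (Suc m)
  have "{1..Suc m} = insert (Suc m) {1..m}" by auto
  then show ?case using Suc by simp
qed simp

lemma NN_base:
  "real (NN m 0 c) * WW m c = (if ss m c \<le> 0 then fact 0 * dd m (0 - ss m c) else 0)"
proof -
  have ev: "Ev m 0 id c \<longleftrightarrow> (\<forall>i\<in>{1..m}. c i = 0)" unfolding Ev_def Eo_def by auto
  have ssz: "ss m c = 0 \<longleftrightarrow> (\<forall>i\<in>{1..m}. c i = 0)" unfolding ss_def by auto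
  have P: "{p. p permutes {1..(0::nat)} \<and> Ev m 0 p c} = (if \<forall>i\<in>{1..m}. c i = 0 then {id} else {})"
    using ev by auto
  show ?thesis
  proof (cases "\<forall>i\<in>{1..m}. c i = 0")
    case True
    have "WW m c = 1" unfolding WW_def using True by (simp add: prod.neutral)
    then show ?thesis using True P ssz unfolding NN_def by simp
  next
    case False
    have "NN m 0 c = 0" unfolding NN_def using P False by simp
    moreover have "ss m c \<noteq> 0" using ssz False by simp
    ultimately show ?thesis by simp
  qed
qed

lemma NN_formula:
  assumes m: "1 \<le> m"
  shows "real (NN m n c) * WW m c = (if ss m c \<le> n then fact n * dd m (n - ss m c) else 0)"
proof (induction n arbitrary: c)
  case 0
  show ?case by (rule NN_base)
next
  case (Suc n)
  define s where "s = ss m c"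
  define G where "G = (if s \<le> Suc n then fact n * dd m (Suc n - s) else (0::real))"
  have Tl: "real (coef c l) * (if valid m c l then real (NN m n (phi c l)) else 0) * WW m c
      = real (Suc l * c (Suc l)) * G" if l: "l < m" for l
  proof (cases "c (Suc l)")
    case 0
    then have "\<not> valid m c l" using l unfolding valid_def by simp
    then show ?thesis using 0 by simp
  next
    case (Suc t)
    note ct = this
    then have v: "valid m c l" unfolding valid_def by simp
    have "real (coef c l) * (if valid m c l then real (NN m n (phi c l)) else 0) * WW m c
       = real (NN m n (phi c l)) * (real (coef c l) * WW m c)" using v by (simp add: ac_simps)
    also have "\<dots> = real (NN m n (phi c l)) * (real (Suc l) * real (c (Suc l)) * WW m (phi c l))"
      using W_phi_lt(1)[of l m c t, OF l ct] by simp
    also have "\<dots> = real (Suc l) * real (c (Suc l)) * (real (NN m n (phi c l)) * WW m (phi c l))"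
      by (simp add: ac_simps)
    also have "\<dots> = real (Suc l * c (Suc l)) * G"
    proof -
      have e2: "ss m (phi c l) + 1 = s" using W_phi_lt(2)[of l m c t, OF l ct] unfolding s_def .
      have e3: "n - ss m (phi c l) = Suc n - s" using e2 by simp
      have e4: "ss m (phi c l) \<le> n \<longleftrightarrow> s \<le> Suc n" using e2 by linarith
      have "real (NN m n (phi c l)) * WW m (phi c l) = G"
        using Suc.IH[of "phi c l"] unfolding G_def e3 e4 .
      then show ?thesis by (simp add: algebra_simps)
    qed
    finally show ?thesis .
  qed
  have Tm: "real (coef c m) * (if valid m c m then real (NN m n (phi c m)) else 0) * WW m c
      = (if s + m \<le> n then fact n * dd m (n - (s + m)) else 0)"
  proof -
    have v: "valid m c m" unfolding valid_def by simp
    have "real (coef c m) * (if valid m c m then real (NN m n (phi c m)) else 0) * WW m c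
       = real (NN m n (phi c m)) * (real (coef c m) * WW m c)" using v by (simp add: ac_simps)
    also have "\<dots> = real (NN m n (phi c m)) * WW m (phi c m)"
      using W_phi_m(1)[OF m] by simp
    finally have "real (coef c m) * (if valid m c m then real (NN m n (phi c m)) else 0) * WW m c
       = real (NN m n (phi c m)) * WW m (phi c m)" .
    then show ?thesis using Suc.IH[of "phi c m"] W_phi_m(2)[OF m] unfolding s_def by simp
  qed
  have Tlong: "real (n - s) * real (NN m n c) * WW m c = real (n - s) * (if s \<le> n then fact n * dd m (n - s) else 0)"
    using Suc.IH[of c] unfolding s_def by (simp add: algebra_simps)
  have sumeq: "(\<Sum>l<m. real (Suc l * c (Suc l))) = real s"
  proof -
    have "(\<Sum>l<m. Suc l * c (Suc l)) = s" unfolding s_def ss_def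
      using sum_shift1[of "\<lambda>i. i * c i" m] by simp
    then show ?thesis by (metis of_nat_sum)
  qed
  have "real (NN m (Suc n) c) * WW m c
     = (\<Sum>l\<le>m. real (coef c l) * (if valid m c l then real (NN m n (phi c l)) else 0) * WW m c)
       + real (n - s) * real (NN m n c) * WW m c"
  proof -
    have r: "real (NN m (Suc n) c) = (\<Sum>l\<le>m. real (coef c l) * (if valid m c l then real (NN m n (phi c l)) else 0)) + real (n - s) * real (NN m n c)"
      unfolding NN_rec[of m n c] of_nat_add of_nat_mult of_nat_sum s_def
      by (rule arg_cong2[where f="(+)"]) (auto intro!: sum.cong)
    show ?thesis by (simp only: r distrib_right sum_distrib_right)
  qed
  also have "(\<Sum>l\<le>m. real (coef c l) * (if valid m c l then real (NN m n (phi c l)) else 0) * WW m c)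
     = (\<Sum>l<m. real (Suc l * c (Suc l)) * G) + (if s + m \<le> n then fact n * dd m (n - (s + m)) else 0)"
    unfolding lessThan_Suc_atMost[symmetric] sum.lessThan_Suc using Tl Tm by simp
  also have "(\<Sum>l<m. real (Suc l * c (Suc l)) * G) = real s * G"
    unfolding sum_distrib_right[symmetric] sumeq ..
  finally have main: "real (NN m (Suc n) c) * WW m c = real s * G + (if s + m \<le> n then fact n * dd m (n - (s + m)) else 0)
      + real (n - s) * (if s \<le> n then fact n * dd m (n - s) else 0)"
    using Tlong by simp
  show ?case
  proof -
    consider "s \<le> n" | "s = Suc n" | "Suc n < s" by linarith
    then show ?thesis
    proof cases
      case 1
      define j where "j = n - s"
      define D where "D = dd m (Suc j)"
      have sj: "Suc n - s = Suc j" using 1 unfolding j_def by simp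
      have dj: "real (Suc j) * D = real j * dd m j + (if m \<le> j then dd m (j - m) else 0)"
        unfolding D_def by simp
      have G: "G = fact n * D" unfolding G_def D_def sj using 1 by simp
      have A: "(if s + m \<le> n then fact n * dd m (n - (s + m)) else 0) = fact n * (if m \<le> j then dd m (j - m) else 0)"
        using 1 unfolding j_def by (auto simp: diff_diff_add add.commute)
      have B: "real (n - s) * (if s \<le> n then fact n * dd m (n - s) else 0) = fact n * (real j * dd m j)"
        using 1 unfolding j_def by simp
      have "real (NN m (Suc n) c) * WW m c = fact n * (real s * D + (real j * dd m j + (if m \<le> j then dd m (j - m) else 0)))"
        using main unfolding G A B by (simp add: algebra_simps)
      also have "\<dots> = fact n * (real s + real (Suc j)) * D" unfolding dj[symmetric] by (simp add: algebra_simps)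
      also have "real s + real (Suc j) = real (Suc n)" using 1 unfolding j_def by simp
      also have "fact n * real (Suc n) * D = fact (Suc n) * dd m (Suc n - s)" unfolding D_def sj by (simp add: algebra_simps)
      finally show ?thesis using 1 unfolding s_def by simp
    next
      case 2
      then show ?thesis using main unfolding G_def s_def by (simp add: algebra_simps)
    next
      case 3
      then show ?thesis using main unfolding G_def s_def by simp
    qed
  qed
qed


lemma dd_nonneg: "0 \<le> dd m k"
proof (induction k rule: less_induct)
  case (less k)
  show ?case
  proof (cases k)
    case (Suc k')
    have "0 \<le> dd m k'" "0 \<le> dd m (k' - m)" using less.IH Suc by auto
    then show ?thesis using Suc by (auto intro!: divide_nonneg_pos add_nonneg_nonneg mult_nonneg_nonneg)
  qed simp
qed

lemma dd_zero: "k < m \<Longrightarrow> dd m (Suc k) = 0"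
  by (induction k) auto

lemma e_step: "real (Suc k) * dd m (Suc k) = real k * dd m k + (if m \<le> k then dd m (k - m) else 0)"
  by simp

lemma dd_zero': "1 \<le> j \<Longrightarrow> j \<le> m \<Longrightarrow> dd m j = 0"
proof -
  assume j: "1 \<le> j" "j \<le> m"
  then have "Suc (j - 1) = j" "j - 1 < m" by auto
  then show ?thesis using dd_zero[of "j - 1" m] by simp
qed

lemma e_one:
  assumes m: "1 \<le> m"
  shows "m + 1 \<le> k \<Longrightarrow> k \<le> 2 * m + 1 \<Longrightarrow> real k * dd m k = 1"
proof (induction k)
  case 0 then show ?case by simp
next
  case (Suc k)
  show ?case
  proof (cases "k = m")
    case True
    have "dd m m = 0" using dd_zero'[OF m] by simp
    then show ?thesis using e_step[of m m] True by simp
  next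
    case False
    then have k1: "m + 1 \<le> k" "k \<le> 2 * m + 1" using Suc.prems by auto
    have "dd m (k - m) = 0" using dd_zero'[of "k - m" m] k1 False Suc.prems by simp
    then show ?thesis using e_step[of k m] Suc.IH[OF k1] k1 by simp
  qed
qed

lemma dd_upper:
  assumes m: "1 \<le> m"
  shows "m + 1 \<le> k \<Longrightarrow> dd m k \<le> 1 / real (m + 1)"
proof (induction k rule: less_induct)
  case (less k)
  show ?case
  proof (cases "k = m + 1")
    case True
    have "real k * dd m k = 1" by (rule e_one[OF m]) (use True in simp_all)
    moreover have "0 < real k" using True by simp
    ultimately have "dd m k = 1 / real k" by (simp add: field_simps del: dd.simps)
    then show ?thesis using True by (simp del: dd.simps)
  next
    case False
    then obtain k' where k': "k = Suc k'" "m + 1 \<le> k'" using less.prems by (cases k) auto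
    have IH1: "dd m k' \<le> 1 / real (m + 1)" using less.IH k' by simp
    have d2: "dd m (k' - m) \<le> 1 / real (m + 1)"
    proof (cases "k' - m \<le> m")
      case True
      then have "dd m (k' - m) = 0" using dd_zero'[of "k' - m" m] k' by simp
      then show ?thesis by simp
    next
      case False
      then show ?thesis using less.IH[of "k' - m"] k' by simp
    qed
    have "real k * dd m k = real k' * dd m k' + dd m (k' - m)" using e_step[of k' m] k' by simp
    also have "\<dots> \<le> real k' * (1 / real (m + 1)) + 1 / real (m + 1)"
      using IH1 d2 by (intro add_mono mult_left_mono) auto
    also have "\<dots> = real k * (1 / real (m + 1))" using k' by (simp add: field_simps)
    finally have h: "real k * dd m k \<le> real k * (1 / real (m + 1))" .
    have "0 < real k" using k' by simp
    show ?thesis using h mult_le_cancel_left_pos[OF \<open>0 < real k\<close>] by blast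
  qed
qed

lemma dd_lower_aux:
  assumes m: "1 \<le> m"
  shows "m + 1 \<le> k \<Longrightarrow> real (k + 1) / real (2 * m + 2) \<le> real k * dd m k"
proof (induction k rule: less_induct)
  case (less k)
  show ?case
  proof (cases "k \<le> 2 * m + 1")
    case True
    then have "real k * dd m k = 1" using e_one[OF m] less.prems by simp
    moreover have "real (k + 1) / real (2 * m + 2) \<le> 1" using True by simp
    ultimately show ?thesis by simp
  next
    case False
    then obtain k' where k': "k = Suc k'" "2 * m + 1 \<le> k'" by (cases k) auto
    have IH1: "real (k' + 1) / real (2 * m + 2) \<le> real k' * dd m k'" using less.IH k' by simp
    have IH2: "real (k' - m + 1) / real (2 * m + 2) \<le> real (k' - m) * dd m (k' - m)"
      using less.IH[of "k' - m"] k' by simp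
    have pos: "0 < real (k' - m)" using k' by simp
    have d2: "1 / real (2 * m + 2) \<le> dd m (k' - m)"
    proof -
      have "real (k' - m) * (1 / real (2 * m + 2)) \<le> real (k' - m + 1) / real (2 * m + 2)"
        by (simp add: divide_right_mono)
      also have "\<dots> \<le> real (k' - m) * dd m (k' - m)" by (rule IH2)
      finally show ?thesis using mult_le_cancel_left_pos[OF pos] by blast
    qed
    have "real (k + 1) / real (2 * m + 2) = real (k' + 1) / real (2 * m + 2) + 1 / real (2 * m + 2)"
      using k' by (simp add: field_simps)
    also have "\<dots> \<le> real k' * dd m k' + dd m (k' - m)" using IH1 d2 by simp
    also have "\<dots> = real k * dd m k" using e_step[of k' m] k' by simp
    finally show ?thesis .
  qed
qed

lemma dd_lower:
  assumes m: "1 \<le> m" and k: "m + 1 \<le> k"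
  shows "1 / real (2 * m + 2) \<le> dd m k"
proof -
  have h1: "real k * (1 / real (2 * m + 2)) \<le> real (k + 1) / real (2 * m + 2)"
    by (simp add: divide_right_mono)
  have h: "real k * (1 / real (2 * m + 2)) \<le> real k * dd m k"
    using order.trans[OF h1 dd_lower_aux[OF m k]] .
  have "0 < real k" using k by simp
  show ?thesis using h mult_le_cancel_left_pos[OF \<open>0 < real k\<close>] by blast
qed


theorem proposition2p1:
  fixes m n :: nat and c :: "nat \<Rightarrow> nat"
  assumes "1 \<le> m" and "m < n"
    and "(\<Sum>i=1..m. i * c i) \<le> n - m - 1"
  shows "1 / (real (2*m+2) * (\<Prod>i=1..m. fact (c i) * real i ^ c i))
           \<le> sym_prob n (\<lambda>p. \<forall>i\<in>{1..m}. cyc_count n p i = c i)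
       \<and> sym_prob n (\<lambda>p. \<forall>i\<in>{1..m}. cyc_count n p i = c i)
           \<le> 1 / (real (m+1) * (\<Prod>i=1..m. fact (c i) * real i ^ c i))"
proof -
  let ?E = "\<lambda>p. \<forall>i\<in>{1..m}. cyc_count n p i = c i"
  have set: "{p. p permutes {1..n} \<and> ?E p} = {p. p permutes {1..n} \<and> Ev m n p c}"
  proof -
    have "?E p \<longleftrightarrow> Ev m n p c" if p: "p permutes {1..n}" for p
    proof -
      have "cyc_count n p i = c i \<longleftrightarrow> Eo {1..n} p i = i * c i" if "i \<in> {1..m}" for i
        using cyc_count_Eo[OF p, of i] that by (metis mult.commute mult_cancel_left not_one_le_zero atLeastAtMost_iff)
      then show ?thesis unfolding Ev_def by blast
    qed
    then show ?thesis by blast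
  qed
  have cardP: "card {p. p permutes {1..n}} = fact n" by (rule card_permutations) simp_all
  have prob: "sym_prob n ?E = real (NN m n c) / fact n"
    unfolding sym_prob_def set NN_def cardP by simp
  have ssle: "ss m c \<le> n - m - 1" using assms(3) unfolding ss_def .
  define k where "k = n - ss m c"
  have k: "m + 1 \<le> k" using ssle assms(2) unfolding k_def by linarith
  have NW: "real (NN m n c) * WW m c = fact n * dd m k"
    using NN_formula[OF assms(1), of n c] ssle unfolding k_def by simp
  have Wpos: "0 < WW m c" unfolding WW_def by (rule prod_pos) auto
  have pr: "sym_prob n ?E = dd m k / WW m c"
    unfolding prob using NW Wpos by (simp add: field_simps)
  have lo: "1 / real (2 * m + 2) \<le> dd m k" by (rule dd_lower[OF assms(1) k])
  have up: "dd m k \<le> 1 / real (m + 1)" by (rule dd_upper[OF assms(1) k])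
  have "1 / (real (2*m+2) * WW m c) \<le> dd m k / WW m c"
    using divide_right_mono[OF lo, of "WW m c"] Wpos by simp
  moreover have "dd m k / WW m c \<le> 1 / (real (m+1) * WW m c)"
    using divide_right_mono[OF up, of "WW m c"] Wpos by simp
  ultimately show ?thesis unfolding pr WW_def by simp
qed

end
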